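(* Let $f:=\mathrm{abs}*M_2$ on $\mathbb R$. Then for every $d\ge2$ and every $r\in\mathbb N$, the function $x\mapsto -f(\|x\|)$ on $\mathbb R^d$ is not conditionally positive definite of order $r$.
   Context: $\mathrm{abs}(x)=|x|$; $M_2(x)=\max(1-|x|,0)$ (centered cardinal B-spline of order 2). $\mathrm{CP}_r(\mathbb R^d)$: a continuous even $g:\mathbb R^d\to\mathbb C$ is conditionally positive definite of order $r$ if $\sum_{j,k}a_j\bar a_kg(x_j-x_k)\ge0$ for all $N$, all $x_1,\dots,x_N\in\mathbb R^d$ and all $a\in\mathbb C^N\setminus\{0\}$ with $\sum_ja_jp(x_j)=0$ for all $d$-variate polynomials $p$ of degree $\le r-1$. *)

theory Defs
  imports "HOL-Analysis.Analysis" "HOL-Library.Complex_Order"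
begin

definition M2 :: "real \<Rightarrow> real" where
  "M2 x = max (1 - \<bar>x\<bar>) 0"

definition absM2 :: "real \<Rightarrow> real" where
  "absM2 t = integral UNIV (\<lambda>s. \<bar>t - s\<bar> * M2 s)"

definition monomial_vec :: "('n::finite \<Rightarrow> nat) \<Rightarrow> real^'n \<Rightarrow> real" where
  "monomial_vec \<alpha> x = (\<Prod>i\<in>UNIV. (x $ i) ^ (\<alpha> i))"

text \<open>The condition
  "sum_j a_j p(x_j) = 0 for all polynomials p of degree at most r-1" is expressed
  (by linearity) via all monomials of total degree < r; for r = 0 there is no condition.\<close>
definition CP :: "nat \<Rightarrow> (real^'n::finite \<Rightarrow> complex) \<Rightarrow> bool" where
  "CP r g \<longleftrightarrow> continuous_on UNIV g \<and> (\<forall>x. g (-x) = g x) \<and>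
     (\<forall>N (xs :: nat \<Rightarrow> real^'n) (a :: nat \<Rightarrow> complex).
        (\<exists>j<N. a j \<noteq> 0) \<longrightarrow>
        (\<forall>\<alpha> :: 'n \<Rightarrow> nat. (\<Sum>i\<in>UNIV. \<alpha> i) < r \<longrightarrow>
            (\<Sum>j<N. a j * complex_of_real (monomial_vec \<alpha> (xs j))) = 0) \<longrightarrow>
        0 \<le> (\<Sum>j<N. \<Sum>k<N. a j * cnj (a k) * g (xs j - xs k)))"

end

theory Submission
  imports Defs
begin

lemma M2_zero: "\<bar>s\<bar> \<ge> 1 \<Longrightarrow> M2 s = 0" by (simp add: M2_def)

lemma absM2_restrict:
  "((\<lambda>s. \<bar>t - s\<bar> * M2 s) has_integral I) UNIV \<longleftrightarrow> ((\<lambda>s. \<bar>t - s\<bar> * M2 s) has_integral I) {-1..1}"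
proof -
  have "(\<lambda>s. if s \<in> {-1..1} then \<bar>t - s\<bar> * M2 s else 0) = (\<lambda>s. \<bar>t - s\<bar> * M2 s)"
    by (auto simp: M2_def fun_eq_iff)
  then show ?thesis using has_integral_restrict_UNIV[of "{-1..1::real}" "\<lambda>s. \<bar>t - s\<bar> * M2 s" I] by simp
qed

lemma ftc_poly:
  fixes P p :: "real \<Rightarrow> real"
  assumes "a \<le> b" "\<And>x. (P has_real_derivative p x) (at x)"
  shows "(p has_integral (P b - P a)) {a..b}"
  using assms by (intro fundamental_theorem_of_calculus) (auto intro: has_field_derivative_at_within simp: has_real_derivative_iff_has_vector_derivative[symmetric])

lemma absM2_small:
  assumes "0 \<le> t" "t \<le> 1"
  shows "absM2 t = 1/3 + t^2 - t^3/3"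
proof -
  define P1 where "P1 = (\<lambda>(s::real). t * s + t * s^2/2 - s^2/2 - s^3/3)"
  define P2 where "P2 = (\<lambda>(s::real). t * s - t * s^2/2 - s^2/2 + s^3/3)"
  define P3 where "P3 = (\<lambda>(s::real). s^2/2 - s^3/3 - t * s + t * s^2/2)"
  have i1: "((\<lambda>s. (t - s) * (1 + s)) has_integral (P1 0 - P1 (-1))) {-1..0}"
    by (rule ftc_poly) (auto simp: P1_def intro!: derivative_eq_intros simp: algebra_simps power2_eq_square)
  have i2: "((\<lambda>s. (t - s) * (1 - s)) has_integral (P2 t - P2 0)) {0..t}"
    using assms by (intro ftc_poly) (auto simp: P2_def intro!: derivative_eq_intros simp: algebra_simps power2_eq_square)
  have i3: "((\<lambda>s. (s - t) * (1 - s)) has_integral (P3 1 - P3 t)) {t..1}"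
    using assms by (intro ftc_poly) (auto simp: P3_def intro!: derivative_eq_intros simp: algebra_simps power2_eq_square)
  have j1: "((\<lambda>s. \<bar>t - s\<bar> * M2 s) has_integral (P1 0 - P1 (-1))) {-1..0}"
    by (rule has_integral_eq[OF _ i1]) (use assms in \<open>auto simp: M2_def\<close>)
  have j2: "((\<lambda>s. \<bar>t - s\<bar> * M2 s) has_integral (P2 t - P2 0)) {0..t}"
    by (rule has_integral_eq[OF _ i2]) (use assms in \<open>auto simp: M2_def\<close>)
  have j3: "((\<lambda>s. \<bar>t - s\<bar> * M2 s) has_integral (P3 1 - P3 t)) {t..1}"
    by (rule has_integral_eq[OF _ i3]) (use assms in \<open>auto simp: M2_def\<close>)
  have j12: "((\<lambda>s. \<bar>t - s\<bar> * M2 s) has_integral ((P1 0 - P1 (-1)) + (P2 t - P2 0))) {-1..t}"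
    by (rule has_integral_combine[OF _ _ j1 j2]) (use assms in auto)
  have "((\<lambda>s. \<bar>t - s\<bar> * M2 s) has_integral ((P1 0 - P1 (-1)) + (P2 t - P2 0) + (P3 1 - P3 t))) {-1..1}"
    by (rule has_integral_combine[OF _ _ j12 j3]) (use assms in auto)
  then have "((\<lambda>s. \<bar>t - s\<bar> * M2 s) has_integral ((P1 0 - P1 (-1)) + (P2 t - P2 0) + (P3 1 - P3 t))) UNIV"
    using absM2_restrict by blast
  then have "absM2 t = (P1 0 - P1 (-1)) + (P2 t - P2 0) + (P3 1 - P3 t)"
    unfolding absM2_def by (rule integral_unique)
  then show ?thesis by (simp add: P1_def P2_def P3_def algebra_simps power2_eq_square power3_eq_cube)
qed

lemma absM2_large:
  assumes "1 \<le> t"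
  shows "absM2 t = t"
proof -
  define P1 where "P1 = (\<lambda>(s::real). t * s + t * s^2/2 - s^2/2 - s^3/3)"
  define P2 where "P2 = (\<lambda>(s::real). t * s - t * s^2/2 - s^2/2 + s^3/3)"
  have i1: "((\<lambda>s. (t - s) * (1 + s)) has_integral (P1 0 - P1 (-1))) {-1..0}"
    by (rule ftc_poly) (auto simp: P1_def intro!: derivative_eq_intros simp: algebra_simps power2_eq_square)
  have i2: "((\<lambda>s. (t - s) * (1 - s)) has_integral (P2 1 - P2 0)) {0..1}"
    using assms by (intro ftc_poly) (auto simp: P2_def intro!: derivative_eq_intros simp: algebra_simps power2_eq_square)
  have j1: "((\<lambda>s. \<bar>t - s\<bar> * M2 s) has_integral (P1 0 - P1 (-1))) {-1..0}"
    by (rule has_integral_eq[OF _ i1]) (use assms in \<open>auto simp: M2_def\<close>)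
  have j2: "((\<lambda>s. \<bar>t - s\<bar> * M2 s) has_integral (P2 1 - P2 0)) {0..1}"
    by (rule has_integral_eq[OF _ i2]) (use assms in \<open>auto simp: M2_def\<close>)
  have "((\<lambda>s. \<bar>t - s\<bar> * M2 s) has_integral ((P1 0 - P1 (-1)) + (P2 1 - P2 0))) {-1..1}"
    by (rule has_integral_combine[OF _ _ j1 j2]) (use assms in auto)
  then have "((\<lambda>s. \<bar>t - s\<bar> * M2 s) has_integral ((P1 0 - P1 (-1)) + (P2 1 - P2 0))) UNIV"
    using absM2_restrict by blast
  then have "absM2 t = (P1 0 - P1 (-1)) + (P2 1 - P2 0)"
    unfolding absM2_def by (rule integral_unique)
  then show ?thesis by (simp add: P1_def P2_def algebra_simps power2_eq_square power3_eq_cube)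
qed

definition phi :: "nat \<Rightarrow> real" where
  "phi n = [1,-2,3,-4,4,-4,4,-3,2,-1] ! n"

definition G :: "int \<Rightarrow> real" where
  "G d = absM2 (sqrt (of_int d) / 3)"

definition alph :: "nat \<Rightarrow> (nat \<Rightarrow> real) \<Rightarrow> int \<Rightarrow> real" where
  "alph n f u = (\<Sum>a<n. \<Sum>a'<n. if int a - int a' = u then f a * f a' else 0)"

lemma regroup_gen:
  fixes f :: "nat \<Rightarrow> real" and H :: "int \<Rightarrow> real"
  shows "(\<Sum>a<n. \<Sum>a'<n. f a * f a' * H (int a - int a')) = (\<Sum>i<2*n. alph n f (int i - int n) * H (int i - int n))"
proof -
  have "(\<Sum>i<2*n. alph n f (int i - int n) * H (int i - int n)) =
        (\<Sum>i<2*n. \<Sum>a<n. \<Sum>a'<n. if i = nat (int a - int a' + int n) then f a * f a' * H (int a - int a') else 0)"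
    unfolding alph_def sum_distrib_right
  proof (intro sum.cong refl)
    fix i a a' assume "i \<in> {..<2*n}" "a \<in> {..<n}" "a' \<in> {..<n}"
    then show "(if int a - int a' = int i - int n then f a * f a' else 0) * H (int i - int n) =
       (if i = nat (int a - int a' + int n) then f a * f a' * H (int a - int a') else 0)"
      by auto
  qed
  also have "\<dots> = (\<Sum>a<n. \<Sum>i<2*n. \<Sum>a'<n. if i = nat (int a - int a' + int n) then f a * f a' * H (int a - int a') else 0)"
    by (rule sum.swap)
  also have "\<dots> = (\<Sum>a<n. \<Sum>a'<n. \<Sum>i<2*n. if i = nat (int a - int a' + int n) then f a * f a' * H (int a - int a') else 0)"
    by (rule sum.cong[OF refl], rule sum.swap)
  also have "\<dots> = (\<Sum>a<n. \<Sum>a'<n. f a * f a' * H (int a - int a'))"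
  proof (intro sum.cong refl)
    fix a a' assume "a \<in> {..<n}" "a' \<in> {..<n}"
    then have "nat (int a - int a' + int n) \<in> {..<2*n}" by auto
    then show "(\<Sum>i<2*n. if i = nat (int a - int a' + int n) then f a * f a' * H (int a - int a') else 0) = f a * f a' * H (int a - int a')"
      by (simp add: sum.delta')
  qed
  finally show ?thesis by simp
qed

lemma alph_simp: "alph n f u = (\<Sum>a<n. if 0 \<le> int a - u \<and> int a - u < int n then f a * f (nat (int a - u)) else 0)"
  unfolding alph_def
proof (intro sum.cong refl)
  fix a assume "a \<in> {..<n}"
  have "(\<Sum>a'<n. if int a - int a' = u then f a * f a' else 0) = (\<Sum>a'<n. if a' = nat (int a - u) \<and> 0 \<le> int a - u then f a * f (nat (int a - u)) else 0)"
    by (intro sum.cong refl) auto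
  also have "\<dots> = (if 0 \<le> int a - u \<and> int a - u < int n then f a * f (nat (int a - u)) else 0)"
    by (auto simp: sum.delta' nat_less_iff)
  finally show "(\<Sum>a'<n. if int a - int a' = u then f a * f a' else 0) = (if 0 \<le> int a - u \<and> int a - u < int n then f a * f (nat (int a - u)) else 0)" .
qed

lemma alpha_tab:
  "alph 10 phi (-10) = 0"
  "alph 10 phi (-9) = -1"
  "alph 10 phi (-8) = 4"
  "alph 10 phi (-7) = -10"
  "alph 10 phi (-6) = 20"
  "alph 10 phi (-5) = -33"
  "alph 10 phi (-4) = 48"
  "alph 10 phi (-3) = -64"
  "alph 10 phi (-2) = 78"
  "alph 10 phi (-1) = -88"
  "alph 10 phi (0) = 92"
  "alph 10 phi (1) = -88"
  "alph 10 phi (2) = 78"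
  "alph 10 phi (3) = -64"
  "alph 10 phi (4) = 48"
  "alph 10 phi (5) = -33"
  "alph 10 phi (6) = 20"
  "alph 10 phi (7) = -10"
  "alph 10 phi (8) = 4"
  "alph 10 phi (9) = -1"
  by (simp_all add: alph_simp phi_def eval_nat_numeral)

lemma sqrt_gt: "0 \<le> l \<Longrightarrow> l^2 < x \<Longrightarrow> l < sqrt x"
  using real_less_rsqrt by blast
lemma sqrt_lt: "0 \<le> h \<Longrightarrow> x < h^2 \<Longrightarrow> sqrt x < h"
  by (metis abs_of_nonneg real_sqrt_abs real_sqrt_less_iff)

lemma sqrt_sq_vals:
  "sqrt (0::real) = 0"
  "sqrt (1::real) = 1"
  "sqrt (4::real) = 2"
  "sqrt (9::real) = 3"
  "sqrt (16::real) = 4"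
  "sqrt (25::real) = 5"
  "sqrt (36::real) = 6"
  "sqrt (49::real) = 7"
  "sqrt (64::real) = 8"
  "sqrt (81::real) = 9"
  "sqrt (100::real) = 10"
  by (auto intro!: real_sqrt_unique)
lemma sqrt_lo_2: "14142135623/10000000000 < sqrt (2::real)"
  by (rule sqrt_gt) (simp_all add: power2_eq_square)
lemma sqrt_hi_2: "sqrt (2::real) < 14142135624/10000000000"
  by (rule sqrt_lt) (simp_all add: power2_eq_square)
lemma sqrt_lo_5: "22360679774/10000000000 < sqrt (5::real)"
  by (rule sqrt_gt) (simp_all add: power2_eq_square)
lemma sqrt_hi_5: "sqrt (5::real) < 22360679775/10000000000"
  by (rule sqrt_lt) (simp_all add: power2_eq_square)
lemma sqrt_lo_8: "28284271247/10000000000 < sqrt (8::real)"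
  by (rule sqrt_gt) (simp_all add: power2_eq_square)
lemma sqrt_hi_8: "sqrt (8::real) < 28284271248/10000000000"
  by (rule sqrt_lt) (simp_all add: power2_eq_square)
lemma sqrt_lo_10: "31622776601/10000000000 < sqrt (10::real)"
  by (rule sqrt_gt) (simp_all add: power2_eq_square)
lemma sqrt_hi_10: "sqrt (10::real) < 31622776602/10000000000"
  by (rule sqrt_lt) (simp_all add: power2_eq_square)
lemma sqrt_lo_13: "36055512754/10000000000 < sqrt (13::real)"
  by (rule sqrt_gt) (simp_all add: power2_eq_square)
lemma sqrt_hi_13: "sqrt (13::real) < 36055512755/10000000000"
  by (rule sqrt_lt) (simp_all add: power2_eq_square)
lemma sqrt_lo_17: "41231056256/10000000000 < sqrt (17::real)"
  by (rule sqrt_gt) (simp_all add: power2_eq_square)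
lemma sqrt_hi_17: "sqrt (17::real) < 41231056257/10000000000"
  by (rule sqrt_lt) (simp_all add: power2_eq_square)
lemma sqrt_lo_18: "42426406871/10000000000 < sqrt (18::real)"
  by (rule sqrt_gt) (simp_all add: power2_eq_square)
lemma sqrt_hi_18: "sqrt (18::real) < 42426406872/10000000000"
  by (rule sqrt_lt) (simp_all add: power2_eq_square)
lemma sqrt_lo_20: "44721359549/10000000000 < sqrt (20::real)"
  by (rule sqrt_gt) (simp_all add: power2_eq_square)
lemma sqrt_hi_20: "sqrt (20::real) < 44721359550/10000000000"
  by (rule sqrt_lt) (simp_all add: power2_eq_square)
lemma sqrt_lo_26: "50990195135/10000000000 < sqrt (26::real)"
  by (rule sqrt_gt) (simp_all add: power2_eq_square)
lemma sqrt_hi_26: "sqrt (26::real) < 50990195136/10000000000"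
  by (rule sqrt_lt) (simp_all add: power2_eq_square)
lemma sqrt_lo_29: "53851648071/10000000000 < sqrt (29::real)"
  by (rule sqrt_gt) (simp_all add: power2_eq_square)
lemma sqrt_hi_29: "sqrt (29::real) < 53851648072/10000000000"
  by (rule sqrt_lt) (simp_all add: power2_eq_square)
lemma sqrt_lo_32: "56568542494/10000000000 < sqrt (32::real)"
  by (rule sqrt_gt) (simp_all add: power2_eq_square)
lemma sqrt_hi_32: "sqrt (32::real) < 56568542495/10000000000"
  by (rule sqrt_lt) (simp_all add: power2_eq_square)
lemma sqrt_lo_34: "58309518948/10000000000 < sqrt (34::real)"
  by (rule sqrt_gt) (simp_all add: power2_eq_square)
lemma sqrt_hi_34: "sqrt (34::real) < 58309518949/10000000000"
  by (rule sqrt_lt) (simp_all add: power2_eq_square)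
lemma sqrt_lo_37: "60827625302/10000000000 < sqrt (37::real)"
  by (rule sqrt_gt) (simp_all add: power2_eq_square)
lemma sqrt_hi_37: "sqrt (37::real) < 60827625303/10000000000"
  by (rule sqrt_lt) (simp_all add: power2_eq_square)
lemma sqrt_lo_40: "63245553203/10000000000 < sqrt (40::real)"
  by (rule sqrt_gt) (simp_all add: power2_eq_square)
lemma sqrt_hi_40: "sqrt (40::real) < 63245553204/10000000000"
  by (rule sqrt_lt) (simp_all add: power2_eq_square)
lemma sqrt_lo_41: "64031242374/10000000000 < sqrt (41::real)"
  by (rule sqrt_gt) (simp_all add: power2_eq_square)
lemma sqrt_hi_41: "sqrt (41::real) < 64031242375/10000000000"
  by (rule sqrt_lt) (simp_all add: power2_eq_square)
lemma sqrt_lo_45: "67082039324/10000000000 < sqrt (45::real)"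
  by (rule sqrt_gt) (simp_all add: power2_eq_square)
lemma sqrt_hi_45: "sqrt (45::real) < 67082039325/10000000000"
  by (rule sqrt_lt) (simp_all add: power2_eq_square)
lemma sqrt_lo_50: "70710678118/10000000000 < sqrt (50::real)"
  by (rule sqrt_gt) (simp_all add: power2_eq_square)
lemma sqrt_hi_50: "sqrt (50::real) < 70710678119/10000000000"
  by (rule sqrt_lt) (simp_all add: power2_eq_square)
lemma sqrt_lo_52: "72111025509/10000000000 < sqrt (52::real)"
  by (rule sqrt_gt) (simp_all add: power2_eq_square)
lemma sqrt_hi_52: "sqrt (52::real) < 72111025510/10000000000"
  by (rule sqrt_lt) (simp_all add: power2_eq_square)
lemma sqrt_lo_53: "72801098892/10000000000 < sqrt (53::real)"
  by (rule sqrt_gt) (simp_all add: power2_eq_square)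
lemma sqrt_hi_53: "sqrt (53::real) < 72801098893/10000000000"
  by (rule sqrt_lt) (simp_all add: power2_eq_square)
lemma sqrt_lo_58: "76157731058/10000000000 < sqrt (58::real)"
  by (rule sqrt_gt) (simp_all add: power2_eq_square)
lemma sqrt_hi_58: "sqrt (58::real) < 76157731059/10000000000"
  by (rule sqrt_lt) (simp_all add: power2_eq_square)
lemma sqrt_lo_61: "78102496759/10000000000 < sqrt (61::real)"
  by (rule sqrt_gt) (simp_all add: power2_eq_square)
lemma sqrt_hi_61: "sqrt (61::real) < 78102496760/10000000000"
  by (rule sqrt_lt) (simp_all add: power2_eq_square)
lemma sqrt_lo_65: "80622577482/10000000000 < sqrt (65::real)"
  by (rule sqrt_gt) (simp_all add: power2_eq_square)
lemma sqrt_hi_65: "sqrt (65::real) < 80622577483/10000000000"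
  by (rule sqrt_lt) (simp_all add: power2_eq_square)
lemma sqrt_lo_68: "82462112512/10000000000 < sqrt (68::real)"
  by (rule sqrt_gt) (simp_all add: power2_eq_square)
lemma sqrt_hi_68: "sqrt (68::real) < 82462112513/10000000000"
  by (rule sqrt_lt) (simp_all add: power2_eq_square)
lemma sqrt_lo_72: "84852813742/10000000000 < sqrt (72::real)"
  by (rule sqrt_gt) (simp_all add: power2_eq_square)
lemma sqrt_hi_72: "sqrt (72::real) < 84852813743/10000000000"
  by (rule sqrt_lt) (simp_all add: power2_eq_square)
lemma sqrt_lo_73: "85440037453/10000000000 < sqrt (73::real)"
  by (rule sqrt_gt) (simp_all add: power2_eq_square)
lemma sqrt_hi_73: "sqrt (73::real) < 85440037454/10000000000"
  by (rule sqrt_lt) (simp_all add: power2_eq_square)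
lemma sqrt_lo_74: "86023252670/10000000000 < sqrt (74::real)"
  by (rule sqrt_gt) (simp_all add: power2_eq_square)
lemma sqrt_hi_74: "sqrt (74::real) < 86023252671/10000000000"
  by (rule sqrt_lt) (simp_all add: power2_eq_square)
lemma sqrt_lo_80: "89442719099/10000000000 < sqrt (80::real)"
  by (rule sqrt_gt) (simp_all add: power2_eq_square)
lemma sqrt_hi_80: "sqrt (80::real) < 89442719100/10000000000"
  by (rule sqrt_lt) (simp_all add: power2_eq_square)
lemma sqrt_lo_82: "90553851381/10000000000 < sqrt (82::real)"
  by (rule sqrt_gt) (simp_all add: power2_eq_square)
lemma sqrt_hi_82: "sqrt (82::real) < 90553851382/10000000000"
  by (rule sqrt_lt) (simp_all add: power2_eq_square)
lemma sqrt_lo_85: "92195444572/10000000000 < sqrt (85::real)"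
  by (rule sqrt_gt) (simp_all add: power2_eq_square)
lemma sqrt_hi_85: "sqrt (85::real) < 92195444573/10000000000"
  by (rule sqrt_lt) (simp_all add: power2_eq_square)
lemma sqrt_lo_89: "94339811320/10000000000 < sqrt (89::real)"
  by (rule sqrt_gt) (simp_all add: power2_eq_square)
lemma sqrt_hi_89: "sqrt (89::real) < 94339811321/10000000000"
  by (rule sqrt_lt) (simp_all add: power2_eq_square)
lemma sqrt_lo_90: "94868329805/10000000000 < sqrt (90::real)"
  by (rule sqrt_gt) (simp_all add: power2_eq_square)
lemma sqrt_hi_90: "sqrt (90::real) < 94868329806/10000000000"
  by (rule sqrt_lt) (simp_all add: power2_eq_square)
lemma sqrt_lo_97: "98488578017/10000000000 < sqrt (97::real)"
  by (rule sqrt_gt) (simp_all add: power2_eq_square)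
lemma sqrt_hi_97: "sqrt (97::real) < 98488578018/10000000000"
  by (rule sqrt_lt) (simp_all add: power2_eq_square)
lemma sqrt_lo_98: "98994949366/10000000000 < sqrt (98::real)"
  by (rule sqrt_gt) (simp_all add: power2_eq_square)
lemma sqrt_hi_98: "sqrt (98::real) < 98994949367/10000000000"
  by (rule sqrt_lt) (simp_all add: power2_eq_square)
lemma sqrt_lo_106: "102956301409/10000000000 < sqrt (106::real)"
  by (rule sqrt_gt) (simp_all add: power2_eq_square)
lemma sqrt_hi_106: "sqrt (106::real) < 102956301410/10000000000"
  by (rule sqrt_lt) (simp_all add: power2_eq_square)
lemma sqrt_lo_113: "106301458127/10000000000 < sqrt (113::real)"
  by (rule sqrt_gt) (simp_all add: power2_eq_square)
lemma sqrt_hi_113: "sqrt (113::real) < 106301458128/10000000000"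
  by (rule sqrt_lt) (simp_all add: power2_eq_square)
lemma sqrt_lo_117: "108166538263/10000000000 < sqrt (117::real)"
  by (rule sqrt_gt) (simp_all add: power2_eq_square)
lemma sqrt_hi_117: "sqrt (117::real) < 108166538264/10000000000"
  by (rule sqrt_lt) (simp_all add: power2_eq_square)
lemma sqrt_lo_128: "113137084989/10000000000 < sqrt (128::real)"
  by (rule sqrt_gt) (simp_all add: power2_eq_square)
lemma sqrt_hi_128: "sqrt (128::real) < 113137084990/10000000000"
  by (rule sqrt_lt) (simp_all add: power2_eq_square)
lemma sqrt_lo_130: "114017542509/10000000000 < sqrt (130::real)"
  by (rule sqrt_gt) (simp_all add: power2_eq_square)
lemma sqrt_hi_130: "sqrt (130::real) < 114017542510/10000000000"
  by (rule sqrt_lt) (simp_all add: power2_eq_square)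
lemma sqrt_lo_145: "120415945787/10000000000 < sqrt (145::real)"
  by (rule sqrt_gt) (simp_all add: power2_eq_square)
lemma sqrt_hi_145: "sqrt (145::real) < 120415945788/10000000000"
  by (rule sqrt_lt) (simp_all add: power2_eq_square)
lemma sqrt_lo_162: "127279220613/10000000000 < sqrt (162::real)"
  by (rule sqrt_gt) (simp_all add: power2_eq_square)
lemma sqrt_hi_162: "sqrt (162::real) < 127279220614/10000000000"
  by (rule sqrt_lt) (simp_all add: power2_eq_square)

lemma G_large: "9 \<le> d \<Longrightarrow> G d = sqrt (of_int d) / 3"
proof -
  assume "9 \<le> d"
  then have "(3::real)^2 \<le> of_int d" by simp
  then have "3 \<le> sqrt (of_int d)" by (rule real_le_rsqrt)
  then have "1 \<le> sqrt (of_int d) / 3" by simp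
  then show ?thesis by (simp add: G_def absM2_large)
qed

lemma G_small: "0 \<le> d \<Longrightarrow> d \<le> 9 \<Longrightarrow> G d = 1/3 + of_int d / 9 - of_int d * sqrt (of_int d) / 81"
proof -
  assume "0 \<le> d" "d \<le> 9"
  then have "sqrt (of_int d) \<le> sqrt (9::real)" by (intro real_sqrt_le_mono) simp
  then have le: "sqrt (of_int d) / 3 \<le> 1" using sqrt_sq_vals(4) by simp
  have sq: "(sqrt (of_int d))^2 = (of_int d :: real)" using \<open>0 \<le> d\<close> by simp
  have "G d = 1/3 + (sqrt (of_int d) / 3)^2 - (sqrt (of_int d) / 3)^3/3"
    unfolding G_def by (rule absM2_small) (use le \<open>0 \<le> d\<close> in auto)
  also have "\<dots> = 1/3 + (sqrt (of_int d))^2 / 9 - (sqrt (of_int d))^2 * sqrt (of_int d) / 81"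
    by (simp add: power_divide power3_eq_cube power2_eq_square)
  finally show ?thesis using sq by simp
qed

definition K2 where
  "K2 = (\<Sum>i<20. \<Sum>j<20. alph 10 phi (int i - 10) * alph 10 phi (int j - 10) * G ((int i - 10)^2 + (int j - 10)^2))"

lemma K2_pos: "K2 > 0"
  unfolding K2_def
  apply (simp add: lessThan_nat_numeral alpha_tab G_large G_small sqrt_sq_vals)
  using sqrt_lo_2 sqrt_hi_2 sqrt_lo_5 sqrt_hi_5 sqrt_lo_8 sqrt_hi_8 sqrt_lo_10 sqrt_hi_10 sqrt_lo_13 sqrt_hi_13 sqrt_lo_17 sqrt_hi_17 sqrt_lo_18 sqrt_hi_18 sqrt_lo_20 sqrt_hi_20 sqrt_lo_26 sqrt_hi_26 sqrt_lo_29 sqrt_hi_29 sqrt_lo_32 sqrt_hi_32 sqrt_lo_34 sqrt_hi_34 sqrt_lo_37 sqrt_hi_37 sqrt_lo_40 sqrt_hi_40 sqrt_lo_41 sqrt_hi_41 sqrt_lo_45 sqrt_hi_45 sqrt_lo_50 sqrt_hi_50 sqrt_lo_52 sqrt_hi_52 sqrt_lo_53 sqrt_hi_53 sqrt_lo_58 sqrt_hi_58 sqrt_lo_61 sqrt_hi_61 sqrt_lo_65 sqrt_hi_65 sqrt_lo_68 sqrt_hi_68 sqrt_lo_72 sqrt_hi_72 sqrt_lo_73 sqrt_hi_73 sqrt_lo_74 sqrt_hi_74 sqrt_lo_80 sqrt_hi_80 sqrt_lo_82 sqrt_hi_82 sqrt_lo_85 sqrt_hi_85 sqrt_lo_89 sqrt_hi_89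 sqrt_lo_90 sqrt_hi_90 sqrt_lo_97 sqrt_hi_97 sqrt_lo_98 sqrt_hi_98 sqrt_lo_106 sqrt_hi_106 sqrt_lo_113 sqrt_hi_113 sqrt_lo_117 sqrt_hi_117 sqrt_lo_128 sqrt_hi_128 sqrt_lo_130 sqrt_hi_130 sqrt_lo_145 sqrt_hi_145 sqrt_lo_162 sqrt_hi_162
  by linarith

fun cc :: "nat \<Rightarrow> nat \<Rightarrow> real" where
  "cc 0 i = (if i = 0 then 1 else 0)"
| "cc (Suc m) i = cc m i - (if i = 0 then 0 else cc m (i - 1))"

lemma cc_0 [simp]: "cc m 0 = 1"
  by (induction m) auto

lemma cc_big: "m < i \<Longrightarrow> cc m i = 0"
  by (induction m arbitrary: i) auto

lemma cc_step:
  "(\<Sum>i<Suc (Suc m). cc (Suc m) i * g i) = (\<Sum>i<Suc m. cc m i * (g i - g (Suc i)))"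
proof -
  have "(\<Sum>i<Suc (Suc m). cc (Suc m) i * g i) =
        (\<Sum>i<Suc (Suc m). cc m i * g i) - (\<Sum>i<Suc (Suc m). (if i = 0 then 0 else cc m (i - 1)) * g i)"
    by (simp add: algebra_simps sum_subtractf)
  also have "(\<Sum>i<Suc (Suc m). cc m i * g i) = (\<Sum>i<Suc m. cc m i * g i)"
    by (simp add: cc_big)
  also have "(\<Sum>i<Suc (Suc m). (if i = 0 then 0 else cc m (i - 1)) * g i) = (\<Sum>i<Suc m. cc m i * g (Suc i))"
    by (subst sum.lessThan_Suc_shift) simp
  finally show ?thesis by (simp add: algebra_simps sum_subtractf)
qed

lemma cc_moment:
  fixes x h :: real
  shows "k < m \<Longrightarrow> (\<Sum>i<Suc m. cc m i * (x + real i * h) ^ k) = 0"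
proof (induction m arbitrary: k)
  case 0 then show ?case by simp
next
  case (Suc m)
  have "(\<Sum>i<Suc (Suc m). cc (Suc m) i * (x + real i * h) ^ k) =
        (\<Sum>i<Suc m. cc m i * ((x + real i * h) ^ k - (x + real (Suc i) * h) ^ k))"
    by (rule cc_step)
  also have "\<dots> = (\<Sum>i<Suc m. cc m i * (- (\<Sum>j<k. of_nat (k choose j) * (x + real i * h) ^ j * h ^ (k - j))))"
  proof (intro sum.cong refl arg_cong[where f="\<lambda>t. cc m _ * t"])
    fix i
    have "(x + real (Suc i) * h) ^ k = ((x + real i * h) + h) ^ k" by (simp add: algebra_simps)
    also have "\<dots> = (\<Sum>j\<le>k. of_nat (k choose j) * (x + real i * h) ^ j * h ^ (k - j))"
      by (rule binomial_ring)
    also have "\<dots> = (\<Sum>j<k. of_nat (k choose j) * (x + real i * h) ^ j * h ^ (k - j)) + (x + real i * h) ^ k"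
      by (simp add: lessThan_Suc_atMost[symmetric])
    finally show "(x + real i * h) ^ k - (x + real (Suc i) * h) ^ k = - (\<Sum>j<k. of_nat (k choose j) * (x + real i * h) ^ j * h ^ (k - j))"
      by simp
  qed
  also have "\<dots> = - (\<Sum>i<Suc m. \<Sum>j<k. cc m i * (of_nat (k choose j) * (x + real i * h) ^ j * h ^ (k - j)))"
    by (simp add: sum_distrib_left sum_negf)
  also have "\<dots> = - (\<Sum>j<k. \<Sum>i<Suc m. cc m i * (of_nat (k choose j) * (x + real i * h) ^ j * h ^ (k - j)))"
    by (subst sum.swap) (rule refl)
  also have "\<dots> = - (\<Sum>j<k. of_nat (k choose j) * h ^ (k - j) * (\<Sum>i<Suc m. cc m i * (x + real i * h) ^ j))"
    by (intro arg_cong[where f=uminus] sum.cong refl) (simp add: sum_distrib_left mult_ac del: sum.lessThan_Suc)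
  also have "\<dots> = 0"
    using Suc by (intro iffD2[OF neg_equal_0_iff_equal] sum.neutral ballI) auto
  finally show ?case .
qed

lemma cc_abs_sum: "(\<Sum>i<Suc m. \<bar>cc m i\<bar>) \<le> 2 ^ m"
proof (induction m)
  case 0 then show ?case by simp
next
  case (Suc m)
  have "(\<Sum>i<Suc (Suc m). \<bar>cc (Suc m) i\<bar>) \<le> (\<Sum>i<Suc (Suc m). \<bar>cc m i\<bar> + (if i = 0 then 0 else \<bar>cc m (i - 1)\<bar>))"
    by (intro sum_mono) auto
  also have "\<dots> = (\<Sum>i<Suc (Suc m). \<bar>cc m i\<bar>) + (\<Sum>i<Suc (Suc m). (if i = 0 then 0 else \<bar>cc m (i - 1)\<bar>))"
    by (rule sum.distrib)
  also have "(\<Sum>i<Suc (Suc m). \<bar>cc m i\<bar>) = (\<Sum>i<Suc m. \<bar>cc m i\<bar>)"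
    by (simp add: cc_big)
  also have "(\<Sum>i<Suc (Suc m). (if i = 0 then 0 else \<bar>cc m (i - 1)\<bar>)) = (\<Sum>i<Suc m. \<bar>cc m i\<bar>)"
    by (subst sum.lessThan_Suc_shift) simp
  finally show ?case using Suc by simp
qed

definition F2 :: "real \<Rightarrow> real \<Rightarrow> real" where
  "F2 x y = absM2 (sqrt (x^2 + y^2))"

definition Y :: "real \<Rightarrow> real" where
  "Y W = (\<Sum>a<10. \<Sum>b<10. \<Sum>a'<10. \<Sum>b'<10. phi a * phi b * (phi a' * phi b') *
            F2 (real a / 3 - real a' / 3 + W) (real b / 3 - real b' / 3))"

lemma Y0: "Y 0 = K2"
proof -
  have e: "F2 (real a / 3 - real a' / 3 + 0) (real b / 3 - real b' / 3) = G ((int a - int a')^2 + (int b - int b')^2)" for a b a' b'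
  proof -
    have "(real a / 3 - real a' / 3)^2 + (real b / 3 - real b' / 3)^2 = of_int ((int a - int a')^2 + (int b - int b')^2) / 9"
      by (simp add: power2_eq_square field_simps)
    then have "sqrt ((real a / 3 - real a' / 3)^2 + (real b / 3 - real b' / 3)^2) = sqrt (of_int ((int a - int a')^2 + (int b - int b')^2)) / 3"
      by (simp only: real_sqrt_divide sqrt_sq_vals)
    then show ?thesis unfolding F2_def G_def by (simp only: add_0_right)
  qed
  have inner: "(\<Sum>b<10. \<Sum>b'<10. phi b * phi b' * G ((int a - int a')^2 + (int b - int b')^2)) = (\<Sum>j<20. alph 10 phi (int j - 10) * G ((int a - int a')^2 + (int j - 10)^2))" for a a' :: nat
      using regroup_gen[where n=10 and f=phi and H="\<lambda>v. G ((int a - int a')^2 + v^2)"] by simp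
  have "Y 0 = (\<Sum>a<10. \<Sum>b<10. \<Sum>a'<10. \<Sum>b'<10. phi a * phi b * (phi a' * phi b') * G ((int a - int a')^2 + (int b - int b')^2))"
    unfolding Y_def e by (rule refl)
  also have "\<dots> = (\<Sum>a<10. \<Sum>a'<10. \<Sum>b<10. \<Sum>b'<10. phi a * phi b * (phi a' * phi b') * G ((int a - int a')^2 + (int b - int b')^2))"
    by (intro sum.cong refl sum.swap)
  also have "\<dots> = (\<Sum>a<10. \<Sum>a'<10. phi a * phi a' * (\<Sum>b<10. \<Sum>b'<10. phi b * phi b' * G ((int a - int a')^2 + (int b - int b')^2)))"
    by (intro sum.cong refl) (simp only: sum_distrib_left mult_ac)
  also have "\<dots> = (\<Sum>a<10. \<Sum>a'<10. phi a * phi a' * (\<Sum>j<20. alph 10 phi (int j - 10) * G ((int a - int a')^2 + (int j - 10)^2)))"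
    by (simp only: inner)
  also have "\<dots> = (\<Sum>i<20. alph 10 phi (int i - 10) * (\<Sum>j<20. alph 10 phi (int j - 10) * G ((int i - 10)^2 + (int j - 10)^2)))"
    using regroup_gen[where n=10 and f=phi and H="\<lambda>u. (\<Sum>j<20. alph 10 phi (int j - 10) * G (u^2 + (int j - 10)^2))"] by simp
  also have "\<dots> = K2"
    unfolding K2_def by (intro sum.cong refl) (simp only: sum_distrib_left mult_ac)
  finally show ?thesis .
qed

lemma phi_sum: "(\<Sum>b<10. phi b) = 0"
  by (simp add: phi_def lessThan_nat_numeral)

lemma phi_abs_sum: "(\<Sum>b<10. \<bar>phi b\<bar>) = 28"
  by (simp add: phi_def lessThan_nat_numeral)

lemma phi0: "phi 0 = 1" by (simp add: phi_def)

lemma sqrt_approx: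
  fixes u1 u2 W :: real
  assumes u1: "\<bar>u1\<bar> \<le> 3" and u2: "\<bar>u2\<bar> \<le> 3" and W: "6 \<le> \<bar>W\<bar>"
  shows "\<bar>F2 (u1 + W) u2 - (\<bar>W\<bar> + sgn W * u1)\<bar> \<le> 9 / \<bar>W\<bar>"
proof -
  define X where "X = \<bar>W\<bar> + sgn W * u1"
  have X: "\<bar>u1 + W\<bar> = X" using u1 W unfolding X_def by (cases "W \<ge> 0") (auto simp: sgn_if)
  have X3: "X \<ge> \<bar>W\<bar> / 2" "X \<ge> 3" using u1 W unfolding X_def by (cases "W \<ge> 0"; auto simp: sgn_if)+
  have sq: "(u1 + W)^2 = X^2" using X by (metis power2_abs)
  have lo: "X \<le> sqrt (X^2 + u2^2)"
    using X3 by (intro real_le_rsqrt) auto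
  have hi: "sqrt (X^2 + u2^2) \<le> X + u2^2 / (2 * X)"
  proof (rule real_le_lsqrt)
    show "0 \<le> X + u2^2 / (2 * X)" using X3 by (auto intro!: add_nonneg_nonneg divide_nonneg_nonneg)
    have "(X + u2^2 / (2 * X))^2 = X^2 + u2^2 + (u2^2 / (2 * X))^2"
      using X3 by (simp add: power2_eq_square field_simps)
    then show "X^2 + u2^2 \<le> (X + u2^2 / (2 * X))^2" by simp
  qed
  have "u2^2 / (2 * X) \<le> 9 / \<bar>W\<bar>"
  proof -
    have "\<bar>u2\<bar>^2 \<le> 3^2" using u2 by (intro power_mono) auto
    then have "u2^2 \<le> 9" by simp
    moreover have "\<bar>W\<bar> \<le> 2 * X" using X3 by simp
    ultimately show ?thesis using W by (intro frac_le) auto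
  qed
  moreover have "F2 (u1 + W) u2 = sqrt (X^2 + u2^2)"
    unfolding F2_def sq using lo X3 by (intro absM2_large) linarith
  ultimately show ?thesis using lo hi unfolding X_def[symmetric] by (simp add: abs_le_iff)
qed

lemma abs_sum_le: "(\<And>x. x \<in> A \<Longrightarrow> \<bar>f x\<bar> \<le> g x) \<Longrightarrow> \<bar>sum f A\<bar> \<le> (sum g A :: real)"
  by (metis order_trans sum_abs sum_mono)

lemma Y_off:
  assumes W: "6 \<le> \<bar>W\<bar>"
  shows "\<bar>Y W\<bar> \<le> 9 * 784^2 / \<bar>W\<bar>"
proof -
  define E where "E a b a' b' = F2 (real a / 3 - real a' / 3 + W) (real b / 3 - real b' / 3) - (\<bar>W\<bar> + sgn W * (real a / 3 - real a' / 3))" for a b a' b' :: nat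
  have Ebd: "\<bar>E a b a' b'\<bar> \<le> 9 / \<bar>W\<bar>" if "a < 10" "b < 10" "a' < 10" "b' < 10" for a b a' b'
    unfolding E_def using that W by (intro sqrt_approx) auto
  have split: "Y W = (\<Sum>a<10. \<Sum>b<10. \<Sum>a'<10. \<Sum>b'<10. phi a * phi b * (phi a' * phi b') * (\<bar>W\<bar> + sgn W * (real a / 3 - real a' / 3)))
     + (\<Sum>a<10. \<Sum>b<10. \<Sum>a'<10. \<Sum>b'<10. phi a * phi b * (phi a' * phi b') * E a b a' b')"
    unfolding Y_def E_def by (simp add: sum.distrib[symmetric] algebra_simps del: sum.lessThan_Suc)
  have z: "(\<Sum>b'<10. phi a * phi b * (phi a' * phi b') * (\<bar>W\<bar> + sgn W * (real a / 3 - real a' / 3))) = 0" for a b a'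
  proof -
    have "(\<Sum>b'<10. phi a * phi b * (phi a' * phi b') * (\<bar>W\<bar> + sgn W * (real a / 3 - real a' / 3)))
       = (\<Sum>b'<10. phi b' * (phi a * phi b * phi a' * (\<bar>W\<bar> + sgn W * (real a / 3 - real a' / 3))))"
      by (simp add: mult_ac)
    also have "\<dots> = (\<Sum>b'<10. phi b') * (phi a * phi b * phi a' * (\<bar>W\<bar> + sgn W * (real a / 3 - real a' / 3)))"
      by (simp only: sum_distrib_right)
    finally have "(\<Sum>b'<10. phi a * phi b * (phi a' * phi b') * (\<bar>W\<bar> + sgn W * (real a / 3 - real a' / 3)))
       = (\<Sum>b'<10. phi b') * (phi a * phi b * phi a' * (\<bar>W\<bar> + sgn W * (real a / 3 - real a' / 3)))" .
    then show ?thesis by (simp add: phi_sum)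
  qed
  have T: "\<bar>phi a * phi b * (phi a' * phi b') * E a b a' b'\<bar> \<le> \<bar>phi a\<bar> * \<bar>phi b\<bar> * (\<bar>phi a'\<bar> * \<bar>phi b'\<bar>) * (9 / \<bar>W\<bar>)"
    if "a < 10" "b < 10" "a' < 10" "b' < 10" for a b a' b'
  proof -
    have "\<bar>phi a * phi b * (phi a' * phi b') * E a b a' b'\<bar> = \<bar>phi a\<bar> * \<bar>phi b\<bar> * (\<bar>phi a'\<bar> * \<bar>phi b'\<bar>) * \<bar>E a b a' b'\<bar>"
      by (simp add: abs_mult)
    also have "\<dots> \<le> \<bar>phi a\<bar> * \<bar>phi b\<bar> * (\<bar>phi a'\<bar> * \<bar>phi b'\<bar>) * (9 / \<bar>W\<bar>)"
      by (rule mult_left_mono[OF Ebd[OF that]]) simp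
    finally show ?thesis .
  qed
  have "\<bar>Y W\<bar> = \<bar>\<Sum>a<10. \<Sum>b<10. \<Sum>a'<10. \<Sum>b'<10. phi a * phi b * (phi a' * phi b') * E a b a' b'\<bar>"
    using split z by simp
  also have "\<dots> \<le> (\<Sum>a<10. \<Sum>b<10. \<Sum>a'<10. \<Sum>b'<10. \<bar>phi a\<bar> * \<bar>phi b\<bar> * (\<bar>phi a'\<bar> * \<bar>phi b'\<bar>) * (9 / \<bar>W\<bar>))"
    by (intro abs_sum_le T) auto
  also have "\<dots> = (9 / \<bar>W\<bar>) * (\<Sum>a<10. \<bar>phi a\<bar>) * (\<Sum>a<10. \<bar>phi a\<bar>) * (\<Sum>a<10. \<bar>phi a\<bar>) * (\<Sum>a<10. \<bar>phi a\<bar>)"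
    by (simp add: sum_distrib_left sum_distrib_right sum_divide_distrib mult_ac)
  also have "\<dots> = 9 * 784^2 / \<bar>W\<bar>"
    by (simp add: phi_abs_sum)
  finally show ?thesis .
qed

lemma sum_split_mult: "(\<Sum>j<n*k. g j) = (\<Sum>i<n. \<Sum>l<k. g (i*k + l :: nat))"
proof -
  have "(\<Sum>j<n*k. g j) = (\<Sum>i<n. \<Sum>j\<in>{i*k..<i*k+k}. g j)"
    by (rule sum.nat_group[symmetric])
  also have "\<dots> = (\<Sum>i<n. \<Sum>l<k. g (i*k + l))"
  proof (rule sum.cong[OF refl])
    fix i
    have "(\<Sum>j\<in>{0 + i*k..<k + i*k}. g j) = (\<Sum>l\<in>{0..<k}. g (l + i*k))"
      by (rule sum.shift_bounds_nat_ivl)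
    then show "(\<Sum>j\<in>{i*k..<i*k+k}. g j) = (\<Sum>l<k. g (i*k + l))"
      by (simp add: add.commute lessThan_atLeast0)
  qed
  finally show ?thesis .
qed

lemma sum_split3: "(\<Sum>j<Suc m * 100. g j) = (\<Sum>i<Suc m. \<Sum>a<10. \<Sum>b<10. g (i*100 + (a*10 + b)))"
proof -
  have "(\<Sum>j<Suc m * 100. g j) = (\<Sum>i<Suc m. \<Sum>l<100. g (i*100 + l))"
    by (rule sum_split_mult)
  also have "\<dots> = (\<Sum>i<Suc m. \<Sum>a<10. \<Sum>b<10. g (i*100 + (a*10 + b)))"
  proof (rule sum.cong[OF refl])
    fix i
    have e: "(10::nat) * 10 = 100" by simp
    have "(\<Sum>l<10*10. g (i*100 + l)) = (\<Sum>a<10. \<Sum>b<10. g (i*100 + (a*10 + b)))"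
      by (rule sum_split_mult)
    then show "(\<Sum>l<100. g (i*100 + l)) = (\<Sum>a<10. \<Sum>b<10. g (i*100 + (a*10 + b)))"
      unfolding e .
  qed
  finally show ?thesis .
qed

lemma dec3:
  fixes a b i :: nat
  assumes "a < 10" "b < 10"
  shows "(i*100 + (a*10 + b)) div 100 = i" "((i*100 + (a*10 + b)) mod 100) div 10 = a"
        "(i*100 + (a*10 + b)) mod 10 = b"
proof -
  have x: "a*10 + b < 100" using assms by linarith
  have e: "i*100 + (a*10 + b) = (a*10 + b) + i*100" by (rule add.commute)
  have e2: "a*10 + b = b + a*10" by (rule add.commute)
  show "(i*100 + (a*10 + b)) div 100 = i"
    unfolding e div_mult_self1[of 100 "a*10+b" i, OF zero_neq_numeral[symmetric]] using x by simp
  show "((i*100 + (a*10 + b)) mod 100) div 10 = a"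
    unfolding e mod_mult_self1 using x assms unfolding e2 by (simp add: div_mult_self1)
  show "(i*100 + (a*10 + b)) mod 10 = b"
  proof -
    have "i*100 + (a*10 + b) = b + (i*10 + a) * 10" by simp
    then show ?thesis using assms by (simp only: mod_mult_self1) simp
  qed
qed


lemma two_idx:
  assumes "CARD('n::finite) \<ge> 2"
  shows "\<exists>i1 i2 :: 'n. i1 \<noteq> i2"
proof (rule ccontr)
  assume "\<not> (\<exists>i1 i2 :: 'n. i1 \<noteq> i2)"
  then have "UNIV = {undefined :: 'n}" by auto
  then have "CARD('n) = 1" by (metis card.empty card_insert_disjoint empty_iff finite.emptyI One_nat_def)
  then show False using assms by simp
qed

lemma norm_emb:
  fixes i1 i2 :: "'n::finite"
  assumes "i1 \<noteq> i2"
  shows "norm ((\<chi> k. if k = i1 then x else if k = i2 then y else 0) :: real^'n) = sqrt (x^2 + y^2)"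
proof -
  have "(\<Sum>k\<in>UNIV. (norm (((\<chi> k. if k = i1 then x else if k = i2 then y else 0) :: real^'n) $ k))^2)
      = (\<Sum>k\<in>UNIV. (if k = i1 then x^2 else 0) + (if k = i2 then y^2 else 0))"
    using assms by (intro sum.cong refl) auto
  also have "\<dots> = x^2 + y^2"
    by (simp add: sum.distrib)
  finally show ?thesis unfolding norm_vec_def L2_set_def by simp
qed

lemma mono_emb:
  fixes i1 i2 :: "'n::finite"
  assumes "i1 \<noteq> i2"
  shows "monomial_vec \<alpha> ((\<chi> k. if k = i1 then x else if k = i2 then y else 0) :: real^'n)
     = x ^ \<alpha> i1 * y ^ \<alpha> i2 * (\<Prod>k\<in>UNIV - {i1} - {i2}. (0::real) ^ \<alpha> k)"
proof -
  let ?f = "\<lambda>k. (((\<chi> k. if k = i1 then x else if k = i2 then y else 0) :: real^'n) $ k) ^ \<alpha> k"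
  have "(\<Prod>k\<in>UNIV. ?f k) = ?f i1 * (\<Prod>k\<in>UNIV - {i1}. ?f k)"
    by (rule prod.remove) auto
  also have "(\<Prod>k\<in>UNIV - {i1}. ?f k) = ?f i2 * (\<Prod>k\<in>UNIV - {i1} - {i2}. ?f k)"
    using assms by (intro prod.remove) auto
  also have "(\<Prod>k\<in>UNIV - {i1} - {i2}. ?f k) = (\<Prod>k\<in>UNIV - {i1} - {i2}. (0::real) ^ \<alpha> k)"
    by (intro prod.cong refl) auto
  finally show ?thesis unfolding monomial_vec_def using assms by simp
qed

theorem mainTheorem5:
  fixes r :: nat
  assumes "CARD('n::finite) \<ge> 2"
  shows "\<not> CP r (\<lambda>x :: real^'n. complex_of_real (- absM2 (norm x)))"
proof
  assume cp: "CP r (\<lambda>x :: real^'n. complex_of_real (- absM2 (norm x)))"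
  obtain i1 i2 :: 'n where i12: "i1 \<noteq> i2" using two_idx[OF assms] by blast
  define emb :: "real \<Rightarrow> real \<Rightarrow> real^'n" where "emb x y = (\<chi> k. if k = i1 then x else if k = i2 then y else 0)" for x y
  define m where "m = r"
  define B :: real where "B = 9 * 784^2"
  have K2p: "K2 > 0" by (rule K2_pos)
  define h :: real where "h = 6 + 2 * 4^m * B / K2"
  have h6: "h \<ge> 6" unfolding h_def B_def using K2p by simp
  define N where "N = Suc m * 100"
  define X1 where "X1 j = real ((j mod 100) div 10) / 3 + real (j div 100) * h" for j :: nat
  define X2 where "X2 j = real (j mod 10) / 3" for j :: nat
  define A where "A j = cc m (j div 100) * (phi ((j mod 100) div 10) * phi (j mod 10))" for j :: nat
  define xs where "xs j = emb (X1 j) (X2 j)" for j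
  define a where "a j = complex_of_real (A j)" for j
  have nz: "\<exists>j<N. a j \<noteq> 0"
    by (rule exI[of _ 0]) (simp add: N_def a_def A_def phi0)
  have dec: "X1 (i*100 + (a*10 + b)) = real a / 3 + real i * h" "X2 (i*100 + (a*10 + b)) = real b / 3"
     "A (i*100 + (a*10 + b)) = cc m i * (phi a * phi b)" if "a < 10" "b < 10" for i a b :: nat
    using dec3[OF that, of i] unfolding X1_def X2_def A_def by simp_all
  have mom: "\<forall>\<alpha> :: 'n \<Rightarrow> nat. (\<Sum>i\<in>UNIV. \<alpha> i) < r \<longrightarrow>
            (\<Sum>j<N. a j * complex_of_real (monomial_vec \<alpha> (xs j))) = 0"
  proof (intro allI impI)
    fix \<alpha> :: "'n \<Rightarrow> nat"
    assume "(\<Sum>i\<in>UNIV. \<alpha> i) < r"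
    moreover have "\<alpha> i1 \<le> (\<Sum>i\<in>UNIV. \<alpha> i)" by (rule member_le_sum) auto
    ultimately have p: "\<alpha> i1 < m" unfolding m_def by linarith
    define Zc where "Zc = (\<Prod>k\<in>UNIV - {i1} - {i2}. (0::real) ^ \<alpha> k)"
    have mv: "monomial_vec \<alpha> (xs j) = X1 j ^ \<alpha> i1 * X2 j ^ \<alpha> i2 * Zc" for j
      unfolding xs_def emb_def Zc_def by (rule mono_emb[OF i12])
    have "(\<Sum>j<N. A j * monomial_vec \<alpha> (xs j)) =
       (\<Sum>i<Suc m. \<Sum>a<10. \<Sum>b<10. cc m i * (phi a * phi b) * ((real a / 3 + real i * h) ^ \<alpha> i1 * (real b / 3) ^ \<alpha> i2 * Zc))"
      unfolding mv N_def sum_split3 by (intro sum.cong refl) (simp add: dec)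
    also have "\<dots> = (\<Sum>a<10. \<Sum>b<10. \<Sum>i<Suc m. cc m i * (phi a * phi b) * ((real a / 3 + real i * h) ^ \<alpha> i1 * (real b / 3) ^ \<alpha> i2 * Zc))"
      by (subst sum.swap, rule sum.cong[OF refl], rule sum.swap)
    also have "\<dots> = (\<Sum>a<10. \<Sum>b<10. (phi a * phi b) * (real b / 3) ^ \<alpha> i2 * Zc * (\<Sum>i<Suc m. cc m i * (real a / 3 + real i * h) ^ \<alpha> i1))"
      by (intro sum.cong refl) (simp add: sum_distrib_left mult_ac del: sum.lessThan_Suc)
    also have "\<dots> = 0"
      using cc_moment[OF p] by simp
    finally have "(\<Sum>j<N. A j * monomial_vec \<alpha> (xs j)) = 0" .
    then have "complex_of_real (\<Sum>j<N. A j * monomial_vec \<alpha> (xs j)) = 0" by simp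
    then show "(\<Sum>j<N. a j * complex_of_real (monomial_vec \<alpha> (xs j))) = 0"
      unfolding a_def by (simp add: of_real_sum of_real_mult)
  qed
  have c0: "0 \<le> (\<Sum>j<N. \<Sum>k<N. a j * cnj (a k) * complex_of_real (- absM2 (norm (xs j - xs k))))"
    using cp nz mom unfolding CP_def by blast
  have c1: "(\<Sum>j<N. \<Sum>k<N. a j * cnj (a k) * complex_of_real (- absM2 (norm (xs j - xs k))))
      = complex_of_real (- (\<Sum>j<N. \<Sum>k<N. A j * A k * absM2 (norm (xs j - xs k))))"
    by (simp add: a_def sum_negf)
  have embd: "emb x y - emb x' y' = emb (x - x') (y - y')" for x y x' y'
    unfolding emb_def by (simp add: vec_eq_iff)
  have nrm: "absM2 (norm (xs j - xs k)) = F2 (X1 j - X1 k) (X2 j - X2 k)" for j k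
  proof -
    have "xs j - xs k = emb (X1 j - X1 k) (X2 j - X2 k)" unfolding xs_def by (rule embd)
    then show ?thesis unfolding F2_def emb_def using norm_emb[OF i12] by simp
  qed
  have inner: "(\<Sum>k<N. A j * A k * F2 (X1 j - X1 k) (X2 j - X2 k)) =
      (\<Sum>i'<Suc m. \<Sum>a'<10. \<Sum>b'<10. A j * (cc m i' * (phi a' * phi b')) * F2 (X1 j - (real a' / 3 + real i' * h)) (X2 j - real b' / 3))" for j
    unfolding N_def sum_split3 by (intro sum.cong refl) (simp add: dec)
  have QF6: "(\<Sum>j<N. \<Sum>k<N. A j * A k * absM2 (norm (xs j - xs k))) =
      (\<Sum>i<Suc m. \<Sum>a<10. \<Sum>b<10. \<Sum>i'<Suc m. \<Sum>a'<10. \<Sum>b'<10.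
         cc m i * (phi a * phi b) * (cc m i' * (phi a' * phi b')) * F2 (real a / 3 + real i * h - (real a' / 3 + real i' * h)) (real b / 3 - real b' / 3))"
    unfolding nrm inner unfolding N_def sum_split3 by (intro sum.cong refl) (simp add: dec)
  define Z where "Z i i' = Y ((real i - real i') * h)" for i i' :: nat
  have arg: "real a / 3 + real i * h - (real a' / 3 + real i' * h) = real a / 3 - real a' / 3 + (real i - real i') * h" for a a' i i' :: nat
    by (simp add: algebra_simps)
  have QF2: "(\<Sum>j<N. \<Sum>k<N. A j * A k * absM2 (norm (xs j - xs k))) = (\<Sum>i<Suc m. \<Sum>i'<Suc m. cc m i * cc m i' * Z i i')"
  proof -
    have "(\<Sum>j<N. \<Sum>k<N. A j * A k * absM2 (norm (xs j - xs k))) =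
      (\<Sum>i<Suc m. \<Sum>a<10. \<Sum>i'<Suc m. \<Sum>b<10. \<Sum>a'<10. \<Sum>b'<10.
         cc m i * (phi a * phi b) * (cc m i' * (phi a' * phi b')) * F2 (real a / 3 - real a' / 3 + (real i - real i') * h) (real b / 3 - real b' / 3))"
      unfolding QF6 arg by (intro sum.cong refl sum.swap)
    also have "\<dots> = (\<Sum>i<Suc m. \<Sum>i'<Suc m. \<Sum>a<10. \<Sum>b<10. \<Sum>a'<10. \<Sum>b'<10.
         cc m i * (phi a * phi b) * (cc m i' * (phi a' * phi b')) * F2 (real a / 3 - real a' / 3 + (real i - real i') * h) (real b / 3 - real b' / 3))"
      by (intro sum.cong[OF refl] sum.swap)
    also have "\<dots> = (\<Sum>i<Suc m. \<Sum>i'<Suc m. cc m i * cc m i' * Z i i')"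
      unfolding Z_def Y_def by (intro sum.cong[OF refl]) (simp add: sum_distrib_left mult_ac)
    finally show ?thesis .
  qed
  have Zd: "Z i i = K2" for i unfolding Z_def using Y0 by simp
  have Zo: "\<bar>Z i i'\<bar> \<le> B / h" if "i \<noteq> i'" for i i'
  proof -
    have "1 \<le> \<bar>real i - real i'\<bar>" using that by linarith
    then have hW: "h \<le> \<bar>(real i - real i') * h\<bar>" using h6 by (simp add: abs_mult)
    have pp: "0 < \<bar>(real i - real i') * h\<bar> * h" using hW h6 by (intro mult_pos_pos) linarith+
    have "\<bar>Z i i'\<bar> \<le> 9 * 784^2 / \<bar>(real i - real i') * h\<bar>"
      unfolding Z_def using h6 hW by (intro Y_off) linarith
    also have "\<dots> \<le> B / h" unfolding B_def using hW h6 pp by (intro divide_left_mono) auto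
    finally show ?thesis .
  qed
  have tm: "cc m i * cc m i' * Z i i' \<ge> (if i = i' then cc m i * cc m i' * K2 else 0) - \<bar>cc m i\<bar> * \<bar>cc m i'\<bar> * (B / h)" for i i'
  proof (cases "i = i'")
    case True
    have "0 \<le> \<bar>cc m i\<bar> * \<bar>cc m i'\<bar> * (B / h)" using h6 unfolding B_def by simp
    then show ?thesis using True Zd by simp
  next
    case False
    have "\<bar>cc m i * cc m i' * Z i i'\<bar> \<le> \<bar>cc m i\<bar> * \<bar>cc m i'\<bar> * (B / h)"
      unfolding abs_mult by (intro mult_left_mono Zo[OF False]) simp
    then show ?thesis using False by (simp add: abs_le_iff)
  qed
  have sumsq: "(\<Sum>i<Suc m. cc m i * cc m i) \<ge> 1"
  proof -
    have "cc m 0 * cc m 0 \<le> (\<Sum>i<Suc m. cc m i * cc m i)"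
      by (rule member_le_sum) auto
    then show ?thesis by simp
  qed
  have abssq: "(\<Sum>i<Suc m. \<Sum>i'<Suc m. \<bar>cc m i\<bar> * \<bar>cc m i'\<bar>) \<le> 4 ^ m"
  proof -
    have "(\<Sum>i<Suc m. \<Sum>i'<Suc m. \<bar>cc m i\<bar> * \<bar>cc m i'\<bar>) = (\<Sum>i<Suc m. \<bar>cc m i\<bar>) * (\<Sum>i<Suc m. \<bar>cc m i\<bar>)"
      by (rule sum_product[symmetric])
    also have "\<dots> \<le> 2 ^ m * 2 ^ m"
      using cc_abs_sum[of m] by (intro mult_mono) (auto intro: sum_nonneg)
    also have "\<dots> = 4 ^ m" by (simp add: power_mult_distrib[symmetric])
    finally show ?thesis .
  qed
  have "(\<Sum>i<Suc m. \<Sum>i'<Suc m. cc m i * cc m i' * Z i i') \<ge>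
        (\<Sum>i<Suc m. \<Sum>i'<Suc m. (if i = i' then cc m i * cc m i' * K2 else 0) - \<bar>cc m i\<bar> * \<bar>cc m i'\<bar> * (B / h))"
    by (intro sum_mono tm)
  also have "(\<Sum>i<Suc m. \<Sum>i'<Suc m. (if i = i' then cc m i * cc m i' * K2 else 0) - \<bar>cc m i\<bar> * \<bar>cc m i'\<bar> * (B / h))
      = K2 * (\<Sum>i<Suc m. cc m i * cc m i) - (B / h) * (\<Sum>i<Suc m. \<Sum>i'<Suc m. \<bar>cc m i\<bar> * \<bar>cc m i'\<bar>)"
    by (simp add: sum_subtractf sum_distrib_left mult_ac sum.delta del: sum.lessThan_Suc)
  finally have low: "(\<Sum>i<Suc m. \<Sum>i'<Suc m. cc m i * cc m i' * Z i i') \<ge>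
      K2 * (\<Sum>i<Suc m. cc m i * cc m i) - (B / h) * (\<Sum>i<Suc m. \<Sum>i'<Suc m. \<bar>cc m i\<bar> * \<bar>cc m i'\<bar>)" .
  have Bh: "(B / h) * 4 ^ m \<le> K2 / 2"
  proof -
    have hpos: "h > 0" using h6 by simp
    have "2 * 4^m * B / K2 \<le> h" unfolding h_def by simp
    then have "2 * 4^m * B \<le> h * K2" using K2p by (simp add: divide_le_eq)
    then show ?thesis using hpos by (simp add: field_simps)
  qed
  have "K2 * (\<Sum>i<Suc m. cc m i * cc m i) \<ge> K2" using sumsq K2p by simp
  moreover have "(B / h) * (\<Sum>i<Suc m. \<Sum>i'<Suc m. \<bar>cc m i\<bar> * \<bar>cc m i'\<bar>) \<le> (B / h) * 4 ^ m"
    using abssq h6 unfolding B_def by (intro mult_left_mono) auto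
  ultimately have "(\<Sum>i<Suc m. \<Sum>i'<Suc m. cc m i * cc m i' * Z i i') \<ge> K2 / 2"
    using low Bh by linarith
  then have c2: "(\<Sum>j<N. \<Sum>k<N. A j * A k * absM2 (norm (xs j - xs k))) > 0"
    unfolding QF2 using K2p by linarith
  from c0 c1 have "0 \<le> complex_of_real (- (\<Sum>j<N. \<Sum>k<N. A j * A k * absM2 (norm (xs j - xs k))))"
    by (simp only:)
  then have "0 \<le> - (\<Sum>j<N. \<Sum>k<N. A j * A k * absM2 (norm (xs j - xs k)))"
    by (simp only: less_eq_complex_def zero_complex.simps Re_complex_of_real)
  with c2 show False by simp
qed

end
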